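(* For every $r\in(\tfrac13,\tfrac12]$, $\gamma(\omega_r)>4$. In particular, the simulation cost of every entangled unsteerable two-qubit Werner state exceeds $4$, which is strictly greater than that of any separable Werner state $\omega_r$, $r\in[0,\tfrac13]$.
   Context: $\omega_r=r|\Psi^-\rangle\langle\Psi^-|+(1-r)\mathbb{I}\otimes\mathbb{I}/4$ with $|\Psi^-\rangle=(|01\rangle-|10\rangle)/\sqrt2$; it is separable iff $r\le\tfrac13$. The assemblage generated from $\rho_{AB}$ by POVMs $\{M_{a|x}\}$ on $A$ is $\sigma_{a|x}=\mathrm{Tr}_A[(M_{a|x}\otimes\mathbb{I})\rho_{AB}]$; an LHS model of size $n$ is a distribution $p(i)$ on $\{1,\dots,n\}$, states $\rho_i$ on $B$ and conditional probabilities $p(a|x,i)$ with $\sigma_{a|x}=\sum_{i=1}^n p(a|x,i)p(i)\rho_i$. $\gamma(\rho_{AB})$ is the smallest $n$ such that every assemblage generated from $\rho_{AB}$ by any family of POVMs on $A$ admits an LHS model of size $n$ ($+\infty$ if no such $n$). *)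

theory Defs
  imports "HOL-Analysis.Analysis" "HOL-Library.Extended_Nat"
begin

text \<open>Finite-dimensional complex matrices are represented as 'complex^'n^'n'
(row index first).  The two-qubit space C^2 (x) C^2 is indexed by the product type
'2 \<times> 2', i.e. the basis |ab> corresponds to the index (a,b).\<close>

definition hermitian_cm :: "complex^'n::finite^'n \<Rightarrow> bool" where
  "hermitian_cm A \<longleftrightarrow> (\<forall>i j. A $ i $ j = cnj (A $ j $ i))"

definition psd :: "complex^'n::finite^'n \<Rightarrow> bool" where
  "psd A \<longleftrightarrow> hermitian_cm A \<and>
     (\<forall>v :: complex^'n. let z = (\<Sum>i\<in>UNIV. cnj (v $ i) * (A *v v) $ i) in Im z = 0 \<and> 0 \<le> Re z)"

definition density :: "complex^'n::finite^'n \<Rightarrow> bool" where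
  "density A \<longleftrightarrow> psd A \<and> trace A = 1"

definition kron :: "complex^'c::finite^'r::finite \<Rightarrow> complex^'d::finite^'s::finite \<Rightarrow> complex^('c \<times> 'd)^('r \<times> 's)" where
  "kron A B = (\<chi> r c. A $ fst r $ fst c * B $ snd r $ snd c)"

definition ptrace_A :: "complex^('a::finite \<times> 'b::finite)^('a \<times> 'b) \<Rightarrow> complex^'b^'b" where
  "ptrace_A X = (\<chi> b b'. \<Sum>a\<in>UNIV. X $ (a, b) $ (a, b'))"

definition povm :: "(complex^'n::finite^'n) list \<Rightarrow> bool" where
  "povm M \<longleftrightarrow> M \<noteq> [] \<and> (\<forall>E\<in>set M. psd E) \<and> sum_list M = mat 1"

definition assemblage :: "complex^('a::finite \<times> 'b::finite)^('a \<times> 'b) \<Rightarrow> (complex^'a^'a) list \<Rightarrow> nat \<Rightarrow> complex^'b^'b" where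
  "assemblage \<rho> M a = ptrace_A (kron (M ! a) (mat 1) ** \<rho>)"

text \<open>The assemblage generated from rho by the family F of POVMs on A (the measurement
label x is the POVM itself) admits an LHS model of size n:
p(i) a distribution on {1..n}, rho_i states on B, p(a|x,i) conditional probabilities.\<close>
definition has_LHS_model :: "nat \<Rightarrow> complex^('a::finite \<times> 'b::finite)^('a \<times> 'b) \<Rightarrow> (complex^'a^'a) list set \<Rightarrow> bool" where
  "has_LHS_model n \<rho> F \<longleftrightarrow>
    (\<exists>(p :: nat \<Rightarrow> real) (\<rho>s :: nat \<Rightarrow> complex^'b^'b) (q :: (complex^'a^'a) list \<Rightarrow> nat \<Rightarrow> nat \<Rightarrow> real).
       (\<forall>i\<in>{1..n}. 0 \<le> p i) \<and> (\<Sum>i=1..n. p i) = 1 \<and>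
       (\<forall>i\<in>{1..n}. density (\<rho>s i)) \<and>
       (\<forall>M\<in>F. \<forall>i\<in>{1..n}. (\<forall>a<length M. 0 \<le> q M a i) \<and> (\<Sum>a<length M. q M a i) = 1) \<and>
       (\<forall>M\<in>F. \<forall>a<length M. assemblage \<rho> M a = (\<Sum>i=1..n. (q M a i * p i) *\<^sub>R \<rho>s i)))"

definition gamma :: "complex^('a::finite \<times> 'b::finite)^('a \<times> 'b) \<Rightarrow> enat" where
  "gamma \<rho> = (if \<exists>n. \<forall>F. (\<forall>M\<in>F. povm M) \<longrightarrow> has_LHS_model n \<rho> F
              then enat (LEAST n. \<forall>F. (\<forall>M\<in>F. povm M) \<longrightarrow> has_LHS_model n \<rho> F)
              else \<infinity>)"

definition psi_minus :: "complex^(2 \<times> 2)" where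
  "psi_minus = (\<chi> k. if k = (0, 1) then 1 / complex_of_real (sqrt 2)
                         else if k = (1, 0) then - 1 / complex_of_real (sqrt 2) else 0)"

definition werner :: "real \<Rightarrow> complex^(2 \<times> 2)^(2 \<times> 2)" where
  "werner r = r *\<^sub>R (\<chi> i j. psi_minus $ i * cnj (psi_minus $ j)) + ((1 - r) / 4) *\<^sub>R mat 1"

end

theory Submission
  imports Defs
begin
lemma UNIV2: "(UNIV::2 set) = {0,1}"
proof -
  have "(0::2) = 2" by simp
  thus ?thesis using UNIV_2 by auto
qed
lemma sum2: "sum f (UNIV::2 set) = f 0 + f 1" by (simp add: UNIV2)
lemma forall2: "(\<forall>i::2. P i) \<longleftrightarrow> P 0 \<and> P 1"
proof -
  have d: "i = 0 \<or> i = 1" for i :: 2 using UNIV2 by blast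
  show ?thesis
  proof
    assume "P 0 \<and> P 1"
    thus "\<forall>i. P i" using d by (metis)
  qed auto
qed
lemma psi_vals: "psi_minus $ (0,0) = 0" "psi_minus $ (1,1) = 0"
  "psi_minus $ (0,1) = 1 / complex_of_real (sqrt 2)" "psi_minus $ (1,0) = - 1 / complex_of_real (sqrt 2)"
  by (simp_all add: psi_minus_def)

lemma sum_prodU: "(\<Sum>k\<in>(UNIV::('a::finite\<times>'b::finite) set). g k) = (\<Sum>c\<in>UNIV. \<Sum>d\<in>UNIV. g (c,d))"
  by (simp add: sum.cartesian_product case_prod_unfold UNIV_Times_UNIV[symmetric] del: UNIV_Times_UNIV)

lemma mat1_sum: "(\<Sum>d\<in>UNIV. x * (mat 1::complex^'b::finite^'b)$b$d * y d) = x * y b"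
proof -
  have "(\<Sum>d\<in>UNIV. x * (mat 1::complex^'b::finite^'b)$b$d * y d) = (\<Sum>d\<in>UNIV. if b = d then x * y d else 0)"
    by (rule sum.cong) (auto simp: mat_def)
  thus ?thesis by simp
qed

lemma ptrace_entry:
  fixes E :: "complex^'a::finite^'a" and W :: "complex^('a\<times>'b::finite)^('a\<times>'b)"
  shows "ptrace_A (kron E (mat 1) ** W) $ b $ b' = (\<Sum>a\<in>UNIV. \<Sum>c\<in>UNIV. E$a$c * W$(c,b)$(a,b'))"
proof -
  have "ptrace_A (kron E (mat 1) ** W) $ b $ b' = (\<Sum>a\<in>UNIV. \<Sum>k\<in>UNIV. (E$a$fst k * (mat 1::complex^'b^'b)$b$snd k) * W$k$(a,b'))"
    by (simp add: ptrace_A_def kron_def matrix_matrix_mult_def)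
  also have "\<dots> = (\<Sum>a\<in>UNIV. \<Sum>c\<in>UNIV. \<Sum>d\<in>UNIV. (E$a$c * (mat 1::complex^'b^'b)$b$d) * W$(c,d)$(a,b'))"
    by (simp add: sum_prodU)
  also have "\<dots> = (\<Sum>a\<in>UNIV. \<Sum>c\<in>UNIV. E$a$c * W$(c,b)$(a,b'))"
    by (simp add: mat1_sum)
  finally show ?thesis .
qed

lemma werner_entry: "werner r $ i $ j = complex_of_real r * (psi_minus $ i * cnj (psi_minus $ j)) + (if i = j then complex_of_real ((1 - r)/4) else 0)"
  unfolding werner_def mat_def
  apply (simp only: vector_add_component vector_scaleR_component vec_lambda_beta)
  by (simp add: scaleR_conv_of_real)

definition Sform :: "real \<Rightarrow> complex^2^2 \<Rightarrow> complex^2^2" where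
  "Sform r E = (\<chi> b b'. (if b = b' then complex_of_real ((1-r)/4) * (E$0$0 + E$1$1) else 0)
       + complex_of_real (r/2) * (if b = 0 then (if b' = 0 then E$1$1 else - E$0$1) else (if b' = 0 then - E$1$0 else E$0$0)))"

lemma s2s2: "complex_of_real (sqrt 2) * complex_of_real (sqrt 2) = 2"
  by (simp flip: of_real_mult)

lemma psi_prods:
  "psi_minus $ (0,1) * cnj (psi_minus $ (0,1)) = 1/2"
  "psi_minus $ (1,0) * cnj (psi_minus $ (1,0)) = 1/2"
  "psi_minus $ (0,1) * cnj (psi_minus $ (1,0)) = - 1/2"
  "psi_minus $ (1,0) * cnj (psi_minus $ (0,1)) = - 1/2"
  by (simp_all add: psi_vals s2s2 flip: of_real_mult)

lemma ptrace_formula: "ptrace_A (kron E (mat 1) ** werner r) = Sform r E"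
  unfolding vec_eq_iff forall2 Sform_def ptrace_entry
  by (simp add: sum2 werner_entry psi_vals s2s2 field_simps)

definition vec2 :: "complex \<Rightarrow> complex \<Rightarrow> complex^2" where
  "vec2 x y = (\<chi> i. if i = 0 then x else y)"

lemma vec2_nth[simp]: "vec2 x y $ 0 = x" "vec2 x y $ 1 = y"
  by (simp_all add: vec2_def)

lemma qf2: "(\<Sum>i\<in>UNIV. cnj (v$i) * ((A::complex^2^2) *v v)$i) =
   cnj (v$0) * (A$0$0 * v$0 + A$0$1 * v$1) + cnj (v$1) * (A$1$0 * v$0 + A$1$1 * v$1)"
  by (simp add: sum2 matrix_vector_mult_def)

lemma herm2: "hermitian_cm (A::complex^2^2) \<longleftrightarrow> Im (A$0$0) = 0 \<and> Im (A$1$1) = 0 \<and> A$0$1 = cnj (A$1$0)"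
  unfolding hermitian_cm_def forall2 by (auto simp: complex_eq_iff)

lemma psd_facts:
  assumes "psd (A::complex^2^2)"
  shows "Re (A$0$0) \<ge> 0" "Re (A$1$1) \<ge> 0"
    "Re (A$0$0) * (Re (A$0$0) * Re (A$1$1) - (cmod (A$1$0))^2) \<ge> 0"
    "Re (A$1$1) * (Re (A$0$0) * Re (A$1$1) - (cmod (A$1$0))^2) \<ge> 0"
proof -
  have h: "Im (A$0$0) = 0" "Im (A$1$1) = 0" "A$0$1 = cnj (A$1$0)" using assms unfolding psd_def herm2 by auto
  have q: "0 \<le> Re (cnj (v$0) * (A$0$0 * v$0 + A$0$1 * v$1) + cnj (v$1) * (A$1$0 * v$0 + A$1$1 * v$1))" for v :: "complex^2"
    using assms unfolding psd_def qf2 Let_def by blast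
  show "Re (A$0$0) \<ge> 0" using q[of "vec2 1 0"] by simp
  show "Re (A$1$1) \<ge> 0" using q[of "vec2 0 1"] by simp
  show "Re (A$0$0) * (Re (A$0$0) * Re (A$1$1) - (cmod (A$1$0))^2) \<ge> 0"
    using q[of "vec2 (- A$0$1) (A$0$0)"] h
    by (simp add: cmod_power2 algebra_simps, simp add: power2_eq_square algebra_simps)
  show "Re (A$1$1) * (Re (A$0$0) * Re (A$1$1) - (cmod (A$1$0))^2) \<ge> 0"
    using q[of "vec2 (A$1$1) (- A$1$0)"] h
    by (simp add: cmod_power2 algebra_simps, simp add: power2_eq_square algebra_simps)
qed

lemma psd2I:
  fixes A :: "complex^2^2"
  assumes h: "Im (A$0$0) = 0" "Im (A$1$1) = 0" "A$0$1 = cnj (A$1$0)"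
    and a: "Re (A$0$0) \<ge> 0" and d: "Re (A$1$1) \<ge> 0"
    and c: "(Re (A$1$0))^2 + (Im (A$1$0))^2 \<le> Re (A$0$0) * Re (A$1$1)"
  shows "psd A"
proof -
  have her: "hermitian_cm A" unfolding herm2 using h by simp
  {
    fix v :: "complex^2"
    define x1 where "x1 = Re (v$0)" define x2 where "x2 = Im (v$0)"
    define y1 where "y1 = Re (v$1)" define y2 where "y2 = Im (v$1)"
    define aa where "aa = Re (A$0$0)" define dd where "dd = Re (A$1$1)"
    define c1 where "c1 = Re (A$1$0)" define c2 where "c2 = Im (A$1$0)"
    let ?z = "cnj (v$0) * (A$0$0 * v$0 + A$0$1 * v$1) + cnj (v$1) * (A$1$0 * v$0 + A$1$1 * v$1)"
    have im: "Im ?z = 0" using h by (simp add: algebra_simps)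
    have re: "Re ?z = aa * (x1^2 + x2^2) + dd * (y1^2 + y2^2) + 2 * (c1 * (x1*y1 + x2*y2) + c2 * (x1*y2 - x2*y1))"
      using h unfolding x1_def x2_def y1_def y2_def aa_def dd_def c1_def c2_def
      by (simp add: algebra_simps power2_eq_square)
    have "Re ?z \<ge> 0"
    proof (cases "aa = 0")
      case True
      hence "c1 = 0" "c2 = 0" using c unfolding aa_def c1_def c2_def
        by (auto simp: sum_power2_le_zero_iff)
      thus ?thesis using re True d dd_def by simp
    next
      case False
      hence apos: "aa > 0" using a aa_def by simp
      have "aa * Re ?z = (aa*x1 + c1*y1 + c2*y2)^2 + (aa*x2 + c1*y2 - c2*y1)^2 + (aa*dd - c1^2 - c2^2) * (y1^2 + y2^2)"
        unfolding re by (simp add: algebra_simps power2_eq_square)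
      moreover have "(aa*dd - c1^2 - c2^2) * (y1^2 + y2^2) \<ge> 0"
        using c unfolding aa_def dd_def c1_def c2_def by simp
      ultimately have "aa * Re ?z \<ge> 0" by (metis add_nonneg_nonneg zero_le_power2)
      thus ?thesis using apos by (simp add: zero_le_mult_iff)
    qed
    note im this
  }
  thus ?thesis unfolding psd_def qf2 Let_def using her by blast
qed

definition bm :: "real \<Rightarrow> real^3 \<Rightarrow> complex^2^2" where
  "bm x b = (\<chi> i j. if i = 0 then (if j = 0 then complex_of_real ((x + b$3)/2) else Complex (b$1/2) (- b$2/2))
                      else (if j = 0 then Complex (b$1/2) (b$2/2) else complex_of_real ((x - b$3)/2)))"

lemma bm_nth[simp]: "bm x b $ 0 $ 0 = complex_of_real ((x + b$3)/2)" "bm x b $ 0 $ 1 = Complex (b$1/2) (- b$2/2)"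
  "bm x b $ 1 $ 0 = Complex (b$1/2) (b$2/2)" "bm x b $ 1 $ 1 = complex_of_real ((x - b$3)/2)"
  by (simp_all add: bm_def)

lemma inner3: "(b::real^3) \<bullet> b = (b$1)^2 + (b$2)^2 + (b$3)^2"
  by (simp add: inner_vec_def sum_3 power2_eq_square)

lemma psd_bm: assumes "0 \<le> x" "(b::real^3) \<bullet> b \<le> x^2" shows "psd (bm x b)"
proof (rule psd2I)
  show "(Re (bm x b $ 1 $ 0))\<^sup>2 + (Im (bm x b $ 1 $ 0))\<^sup>2 \<le> Re (bm x b $ 0 $ 0) * Re (bm x b $ 1 $ 1)"
    using assms(2) unfolding inner3 by (simp add: power2_eq_square field_simps)
  show "0 \<le> Re (bm x b $ 0 $ 0)" "0 \<le> Re (bm x b $ 1 $ 1)"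
  proof -
    have "(b$3)^2 \<le> x^2" using assms(2) unfolding inner3 by (smt (verit) zero_le_power2)
    hence "\<bar>b$3\<bar> \<le> x" using assms(1) by (metis abs_le_square_iff abs_of_nonneg)
    thus "0 \<le> Re (bm x b $ 0 $ 0)" "0 \<le> Re (bm x b $ 1 $ 1)" by auto
  qed
qed (auto simp: complex_eq_iff)

lemma trace2: "trace (A::complex^2^2) = A$0$0 + A$1$1"
  by (simp add: trace_def sum2)

lemma trace_bm: "trace (bm x b) = complex_of_real x"
  by (simp add: trace2 flip: of_real_add) (simp add: field_simps)

definition bloch :: "complex^2^2 \<Rightarrow> real^3" where
  "bloch A = vector [2 * Re (A$1$0), 2 * Im (A$1$0), Re (A$0$0) - Re (A$1$1)]"

lemma bloch_bm: "bloch (bm x b) = b"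
  unfolding bloch_def vec_eq_iff forall_3 by (simp add: field_simps)

lemma linear_bloch: "linear bloch"
  by (rule linearI) (simp_all add: bloch_def vec_eq_iff forall_3 algebra_simps)

definition retr :: "complex^2^2 \<Rightarrow> real" where "retr A = Re (trace A)"

lemma linear_retr: "linear retr"
  by (rule linearI) (simp_all add: retr_def trace2 algebra_simps)

lemma density_bloch:
  assumes "density (A::complex^2^2)" shows "norm (bloch A) \<le> 1" "retr A = 1"
proof -
  have ps: "psd A" and tr: "trace A = 1" using assms density_def by auto
  have h: "Im (A$0$0) = 0" "Im (A$1$1) = 0" "A$0$1 = cnj (A$1$0)" using ps unfolding psd_def herm2 by auto
  note f = psd_facts[OF ps]
  have ad: "Re (A$0$0) + Re (A$1$1) = 1" using tr unfolding trace2 by (metis one_complex.simps(1) plus_complex.simps(1))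
  then show "retr A = 1" by (simp add: retr_def trace2)
  define D where "D = Re (A$0$0) * Re (A$1$1) - (cmod (A$1$0))^2"
  have "Re (A$0$0) * D + Re (A$1$1) * D \<ge> 0" using f D_def by simp
  hence D0: "D \<ge> 0" using ad by (simp add: distrib_right[symmetric])
  have "bloch A \<bullet> bloch A = 4 * (cmod (A$1$0))^2 + (Re (A$0$0) - Re (A$1$1))^2"
    unfolding inner3 bloch_def cmod_power2 by (simp add: algebra_simps power2_eq_square)
  also have "\<dots> = (Re (A$0$0) + Re (A$1$1))^2 - 4 * D" unfolding D_def by (simp add: algebra_simps power2_eq_square)
  also have "\<dots> \<le> 1" using ad D0 by simp
  finally have "bloch A \<bullet> bloch A \<le> 1" .
  thus "norm (bloch A) \<le> 1" by (simp add: norm_eq_sqrt_inner)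
qed
lemma elim_span:
  fixes b :: "nat \<Rightarrow> real^3"
  assumes "finite I" "k \<in> I" "f k \<noteq> 0" "(\<Sum>i\<in>I. f i *\<^sub>R b i) = 0"
  shows "b k \<in> span (b ` (I - {k}))"
proof -
  define S where "S = (\<Sum>i\<in>I-{k}. f i *\<^sub>R b i)"
  have "(\<Sum>i\<in>I. f i *\<^sub>R b i) = f k *\<^sub>R b k + S"
    unfolding S_def using assms(1,2) by (rule sum.remove)
  hence "f k *\<^sub>R b k = - S" using assms(4)
    by (simp add: eq_neg_iff_add_eq_0)
  hence "(1 / f k) *\<^sub>R (f k *\<^sub>R b k) = (1 / f k) *\<^sub>R (- S)" by simp
  hence bk: "b k = (- 1 / f k) *\<^sub>R S" using assms(3) by simp
  have "S \<in> span (b ` (I - {k}))"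
    unfolding S_def by (intro span_sum span_mul span_base) auto
  hence "(- 1 / f k) *\<^sub>R S \<in> span (b ` (I - {k}))" by (rule span_mul)
  thus ?thesis using bk by simp
qed

lemma geom:
  fixes b :: "nat \<Rightarrow> real^3" and r :: real
  assumes nb: "\<forall>i\<in>{1..4}. norm (b i) \<le> 1" and r: "r > 1/3"
  and rep: "\<forall>u. norm u = 1 \<longrightarrow> (\<exists>lam. (\<forall>i\<in>{1..4::nat}. 0 \<le> lam i) \<and> (\<Sum>i=1..4. lam i) = 1 \<and> (\<Sum>i=1..4. lam i *\<^sub>R b i) = r *\<^sub>R u)"
  shows False
proof -
  define I where "I = {1..4::nat}"
  have fI: "finite I" and cI: "card I = 4" by (auto simp: I_def)
  have step1: False if m: "m \<noteq> 0" "\<forall>i\<in>I. m \<bullet> b i = 0" for m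
  proof -
    define u where "u = (1 / norm m) *\<^sub>R m"
    have nu: "norm u = 1" using m by (simp add: u_def)
    then obtain lam where l: "(\<Sum>i=1..4. lam i *\<^sub>R b i) = r *\<^sub>R u" using rep by blast
    have "u \<bullet> (r *\<^sub>R u) = r" using nu by (simp add: dot_square_norm)
    moreover have "u \<bullet> (\<Sum>i=1..4. lam i *\<^sub>R b i) = (\<Sum>i=1..4. lam i * (u \<bullet> b i))"
      by (simp add: inner_sum_right)
    moreover have "\<forall>i\<in>I. u \<bullet> b i = 0" using m by (simp add: u_def)
    hence "(\<Sum>i=1..4. lam i * (u \<bullet> b i)) = 0" by (simp add: I_def)
    ultimately have "r = 0" using l by metis
    thus False using r by simp
  qed
  have step2: "\<exists>d. (\<forall>i\<in>I. 0 \<le> d i) \<and> (\<Sum>i\<in>I. d i) = 1 \<and> d j \<ge> r / (1 + r) \<and> (\<Sum>i\<in>I. d i *\<^sub>R b i) = 0"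
    if j: "j \<in> I" for j
  proof (cases "b j = 0")
    case True
    have "r / (1 + r) \<le> 1" using r by simp
    moreover have "(\<Sum>i\<in>I. (if i = j then 1 else 0) *\<^sub>R b i) = (\<Sum>i\<in>I. if i = j then b i else 0)"
      by (rule sum.cong) auto
    moreover have "(\<Sum>i\<in>I. (if i = j then 1 else 0::real)) = 1" using j fI by simp
    ultimately show ?thesis using j fI True
      by (intro exI[of _ "\<lambda>i. if i = j then 1 else 0"]) auto
  next
    case False
    define u where "u = (- 1 / norm (b j)) *\<^sub>R b j"
    have nu: "norm u = 1" using False by (simp add: u_def)
    then obtain lam where l0: "\<forall>i\<in>I. 0 \<le> lam i" and l1: "(\<Sum>i\<in>I. lam i) = 1"
        and l: "(\<Sum>i\<in>I. lam i *\<^sub>R b i) = r *\<^sub>R u" using rep unfolding I_def by blast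
    define t where "t = r / norm (b j)"
    have nbj: "0 < norm (b j)" "norm (b j) \<le> 1" using False nb j I_def by auto
    have tr: "t \<ge> r" using nbj r unfolding t_def by (simp add: field_simps mult_left_le)
    have tpos: "t > 0" using nbj r t_def by simp
    define d where "d i = (lam i + (if i = j then t else 0)) / (1 + t)" for i
    have "(\<Sum>i\<in>I. d i) = ((\<Sum>i\<in>I. lam i) + t) / (1 + t)"
      unfolding d_def using fI j by (simp add: sum_divide_distrib[symmetric] sum.distrib)
    hence s1: "(\<Sum>i\<in>I. d i) = 1" using l1 tpos by simp
    have "(\<Sum>i\<in>I. d i *\<^sub>R b i) = (\<Sum>i\<in>I. (1 / (1 + t)) *\<^sub>R (lam i *\<^sub>R b i) + (1 / (1 + t)) *\<^sub>R (if i = j then t *\<^sub>R b i else 0))"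
      by (rule sum.cong) (auto simp: d_def add_divide_distrib scaleR_add_left)
    also have "\<dots> = (1 / (1 + t)) *\<^sub>R (\<Sum>i\<in>I. lam i *\<^sub>R b i) + (1 / (1 + t)) *\<^sub>R (\<Sum>i\<in>I. (if i = j then t *\<^sub>R b i else 0))"
      by (simp add: sum.distrib scaleR_right.sum)
    also have "\<dots> = (1 / (1 + t)) *\<^sub>R ((\<Sum>i\<in>I. lam i *\<^sub>R b i) + t *\<^sub>R b j)"
      using fI j by (simp add: scaleR_add_right)
    also have "\<dots> = 0" using l tpos nbj by (simp add: u_def t_def)
    finally have s2: "(\<Sum>i\<in>I. d i *\<^sub>R b i) = 0" .
    have "d j \<ge> t / (1 + t)" using l0 j tpos by (simp add: d_def divide_right_mono)
    moreover have "t / (1 + t) \<ge> r / (1 + r)" using tr r tpos by (simp add: field_simps)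
    ultimately have "d j \<ge> r / (1 + r)" by linarith
    moreover have "\<forall>i\<in>I. 0 \<le> d i" using l0 tpos by (simp add: d_def)
    ultimately show ?thesis using s1 s2 by blast
  qed
  then obtain D where D: "\<forall>j\<in>I. (\<forall>i\<in>I. 0 \<le> D j i) \<and> (\<Sum>i\<in>I. D j i) = 1 \<and> D j j \<ge> r / (1 + r) \<and> (\<Sum>i\<in>I. D j i *\<^sub>R b i) = 0"
    by metis
  have step3: "\<forall>i\<in>I. D j i = D k i" if jk: "j \<in> I" "k \<in> I" for j k
  proof (rule ccontr)
    assume "\<not> ?thesis"
    then obtain k0 where k0: "k0 \<in> I" "D j k0 \<noteq> D k k0" by blast
    define d where "d = D j"
    define e where "e i = D j i - D k i" for i
    have dK: "(\<Sum>i\<in>I. d i *\<^sub>R b i) = 0" and d1: "(\<Sum>i\<in>I. d i) = 1" using D jk d_def by auto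
    have eK: "(\<Sum>i\<in>I. e i *\<^sub>R b i) = 0" using D jk
      by (simp add: e_def scaleR_diff_left sum_subtractf)
    have e0: "(\<Sum>i\<in>I. e i) = 0" using D jk by (simp add: e_def sum_subtractf)
    have ek: "e k0 \<noteq> 0" using k0 e_def by simp
    define f where "f i = d i - (d k0 / e k0) * e i" for i
    have "(\<Sum>i\<in>I. f i *\<^sub>R b i) = (\<Sum>i\<in>I. d i *\<^sub>R b i) - (d k0 / e k0) *\<^sub>R (\<Sum>i\<in>I. e i *\<^sub>R b i)"
      by (simp add: f_def scaleR_diff_left sum_subtractf scaleR_right.sum)
    hence fK: "(\<Sum>i\<in>I. f i *\<^sub>R b i) = 0" using dK eK by simp
    have fk: "f k0 = 0" using ek by (simp add: f_def)
    have "\<exists>l\<in>I. f l \<noteq> 0"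
    proof (rule ccontr)
      assume "\<not> ?thesis"
      hence "(\<Sum>i\<in>I. f i) = 0" by simp
      moreover have "(\<Sum>i\<in>I. f i) = 1" using d1 e0 by (simp add: f_def sum_subtractf sum_distrib_left[symmetric] flip: sum_divide_distrib)
      ultimately show False by simp
    qed
    then obtain l where l: "l \<in> I" "f l \<noteq> 0" by blast
    have lk: "l \<noteq> k0" using l fk by auto
    define W where "W = b ` (I - {k0} - {l})"
    have fK': "(\<Sum>i\<in>I - {k0}. f i *\<^sub>R b i) = 0" using fK fk k0 fI by (simp add: sum.remove)
    have bl: "b l \<in> span W" unfolding W_def
      by (rule elim_span[OF _ _ _ fK']) (use fI l lk in auto)
    have bk: "b k0 \<in> span (b ` (I - {k0}))" by (rule elim_span[OF fI k0(1) ek eK])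
    have "b ` (I - {k0}) \<subseteq> span W"
    proof
      fix x assume "x \<in> b ` (I - {k0})"
      then obtain i where "i \<in> I - {k0}" "x = b i" by auto
      thus "x \<in> span W" using bl unfolding W_def
        by (cases "i = l") (auto intro: span_base)
    qed
    hence bk': "b k0 \<in> span W" using bk by (metis span_mono span_span subsetD)
    have allW: "b ` I \<subseteq> span W"
    proof
      fix x assume "x \<in> b ` I"
      then obtain i where "i \<in> I" "x = b i" by auto
      thus "x \<in> span W" using bl bk' unfolding W_def
        by (cases "i = l"; cases "i = k0") (auto intro: span_base)
    qed
    have "card (I - {k0} - {l}) = 2" using cI k0 l lk fI by simp
    hence "card W \<le> 2" unfolding W_def by (metis card_image_le finite_Diff fI)
    hence "dim (b ` I) \<le> 2" using dim_le_card[OF allW] W_def fI by force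
    hence "dim (b ` I) < DIM(real^3)" by simp
    then obtain m where m: "m \<noteq> 0" "\<And>y. y \<in> span (b ` I) \<Longrightarrow> orthogonal m y"
      using orthogonal_to_subspace_exists by blast
    have "\<forall>i\<in>I. m \<bullet> b i = 0" using m(2) by (auto simp: orthogonal_def span_base)
    thus False using step1 m(1) by blast
  qed
  have "(\<Sum>i\<in>I. D 1 i) \<ge> (\<Sum>i\<in>I. r / (1 + r))"
  proof (rule sum_mono)
    fix i assume i: "i \<in> I"
    have "1 \<in> I" by (simp add: I_def)
    thus "r / (1 + r) \<le> D 1 i" using step3[OF \<open>1 \<in> I\<close> i] D i by auto
  qed
  hence "1 \<ge> 4 * (r / (1 + r))" using D cI by (simp add: I_def)
  thus False using r by (simp add: field_simps)
qed


lemma Sform_bm: "Sform r (bm 1 (- u)) = bm (1/2) ((r/2) *\<^sub>R u)"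
  unfolding vec_eq_iff forall2 Sform_def
  by (simp add: complex_eq_iff field_simps)

lemma povm_u: assumes "u \<bullet> u \<le> 1" shows "povm [bm 1 (- u), bm 1 u]"
proof -
  have "psd (bm 1 (- u))" "psd (bm 1 u)" using assms by (auto intro!: psd_bm)
  moreover have "bm 1 (- u) + bm 1 u = mat 1"
    unfolding vec_eq_iff forall2 by (simp add: mat_def complex_eq_iff field_simps)
  ultimately show ?thesis unfolding povm_def by simp
qed

lemma sum_pad4: assumes "n \<le> 4" shows "(\<Sum>i=1..(4::nat). if i \<le> n then f i else 0) = (\<Sum>i=1..n. f i)"
proof -
  have "(\<Sum>i=1..(4::nat). if i \<le> n then f i else 0) = (\<Sum>i\<in>{1..4} \<inter> {i. i \<le> n}. f i)"
    by (simp add: sum.inter_restrict)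
  also have "{1..4} \<inter> {i. i \<le> n} = {1..n}" using assms by auto
  finally show ?thesis .
qed

lemma notLHS:
  assumes n: "n \<le> 4" and r: "1/3 < r"
  shows "\<not> has_LHS_model n (werner r) {M. povm M}"
proof
  assume "has_LHS_model n (werner r) {M. povm M}"
  then obtain p \<rho>s q where p0: "\<forall>i\<in>{1..n}. 0 \<le> p i" and p1: "(\<Sum>i=1..n. p i) = 1"
    and dens: "\<forall>i\<in>{1..n}. density (\<rho>s i)"
    and qc: "\<forall>M\<in>{M. povm M}. \<forall>i\<in>{1..n}. (\<forall>a<length M. 0 \<le> q M a i) \<and> (\<Sum>a<length M. q M a i) = 1"
    and eq: "\<forall>M\<in>{M. povm M}. \<forall>a<length M. assemblage (werner r) M a = (\<Sum>i=1..n. (q M a i * p i) *\<^sub>R \<rho>s i)"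
    unfolding has_LHS_model_def by blast
  define b where "b i = (if i \<le> n then bloch (\<rho>s i) else 0)" for i
  show False
  proof (rule geom[of b r])
    show "\<forall>i\<in>{1..4}. norm (b i) \<le> 1" using dens density_bloch by (auto simp: b_def)
    show "1/3 < r" by (rule r)
    show "\<forall>u. norm u = 1 \<longrightarrow> (\<exists>lam. (\<forall>i\<in>{1..4::nat}. 0 \<le> lam i) \<and> (\<Sum>i=1..4. lam i) = 1 \<and> (\<Sum>i=1..4. lam i *\<^sub>R b i) = r *\<^sub>R u)"
    proof (intro allI impI)
      fix u :: "real^3" assume u: "norm u = 1"
      define M where "M = [bm 1 (- u), bm 1 u]"
      have pM: "povm M" unfolding M_def by (rule povm_u) (use u in \<open>simp add: dot_square_norm\<close>)
      have "assemblage (werner r) M 0 = bm (1/2) ((r/2) *\<^sub>R u)"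
        unfolding assemblage_def M_def by (simp add: ptrace_formula Sform_bm)
      hence E: "bm (1/2) ((r/2) *\<^sub>R u) = (\<Sum>i=1..n. (q M 0 i * p i) *\<^sub>R \<rho>s i)"
        using eq pM M_def by auto
      have "bloch (bm (1/2) ((r/2) *\<^sub>R u)) = (\<Sum>i=1..n. (q M 0 i * p i) *\<^sub>R bloch (\<rho>s i))"
        unfolding E by (simp add: linear_sum[OF linear_bloch] linear_cmul[OF linear_bloch])
      hence B: "(r/2) *\<^sub>R u = (\<Sum>i=1..n. (q M 0 i * p i) *\<^sub>R bloch (\<rho>s i))" by (simp add: bloch_bm)
      have "retr (bm (1/2) ((r/2) *\<^sub>R u)) = (\<Sum>i=1..n. (q M 0 i * p i) * retr (\<rho>s i))"
        unfolding E by (simp add: linear_sum[OF linear_retr] linear_cmul[OF linear_retr])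
      also have "\<dots> = (\<Sum>i=1..n. q M 0 i * p i)" using dens density_bloch by simp
      finally have T: "(\<Sum>i=1..n. q M 0 i * p i) = 1/2" by (simp add: retr_def trace_bm)
      define lam where "lam i = (if i \<le> n then 2 * (q M 0 i * p i) else 0)" for i
      have "\<forall>i\<in>{1..4::nat}. 0 \<le> lam i"
        using qc pM p0 unfolding lam_def M_def by auto
      moreover have "(\<Sum>i=1..4. lam i) = 1"
        unfolding lam_def sum_pad4[OF n] using T by (simp add: sum_distrib_left[symmetric])
      moreover have "(\<Sum>i=1..4. lam i *\<^sub>R b i) = r *\<^sub>R u"
      proof -
        have "(\<Sum>i=1..4. lam i *\<^sub>R b i) = (\<Sum>i=1..4. if i \<le> n then 2 *\<^sub>R ((q M 0 i * p i) *\<^sub>R bloch (\<rho>s i)) else 0)"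
          by (rule sum.cong) (auto simp: lam_def b_def)
        also have "\<dots> = 2 *\<^sub>R (\<Sum>i=1..n. (q M 0 i * p i) *\<^sub>R bloch (\<rho>s i))"
          unfolding sum_pad4[OF n] by (simp add: scaleR_right.sum)
        also have "\<dots> = r *\<^sub>R u" unfolding B[symmetric] by simp
        finally show ?thesis .
      qed
      ultimately show "\<exists>lam. (\<forall>i\<in>{1..4::nat}. 0 \<le> lam i) \<and> (\<Sum>i=1..4. lam i) = 1 \<and> (\<Sum>i=1..4. lam i *\<^sub>R b i) = r *\<^sub>R u"
        by blast
    qed
  qed
qed

definition c3 :: real where "c3 = 1 / sqrt 3"
lemma c3sq: "c3 * c3 = 1/3" by (simp add: c3_def)
lemma c3pos: "0 < c3" "c3 < 1" by (auto simp: c3_def)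

definition av :: "nat \<Rightarrow> real^3" where
  "av i = c3 *\<^sub>R (if i = 1 then vector [1,1,1] else if i = 2 then vector [1,-1,-1]
                     else if i = 3 then vector [-1,1,-1] else vector [-1,-1,1])"

lemma av_vals:
  "av 1 $ 1 = c3" "av 1 $ 2 = c3" "av 1 $ 3 = c3"
  "av 2 $ 1 = c3" "av 2 $ 2 = - c3" "av 2 $ 3 = - c3"
  "av 3 $ 1 = - c3" "av 3 $ 2 = c3" "av 3 $ 3 = - c3"
  "av 4 $ 1 = - c3" "av 4 $ 2 = - c3" "av 4 $ 3 = c3"
  by (simp_all add: av_def)

lemma av_props: assumes "i \<in> {1..4::nat}" shows "av i \<bullet> av i = 1" "av i $ 3 > -1"
proof -
  have "i = 1 \<or> i = 2 \<or> i = 3 \<or> i = 4" using assms by auto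
  moreover have "av j \<bullet> av j = 1 \<and> av j $ 3 > -1" if "j = 1 \<or> j = 2 \<or> j = 3 \<or> j = 4" for j
    using that c3sq c3pos by (auto simp: inner3 av_def power2_eq_square)
  ultimately show "av i \<bullet> av i = 1" "av i $ 3 > -1" by blast+
qed

definition tq :: "complex^2^2 \<Rightarrow> real^3 \<Rightarrow> complex" where
  "tq E a = E$0$0 * complex_of_real ((1 + a$3)/2) + E$0$1 * Complex (a$1/2) (a$2/2)
          + E$1$0 * Complex (a$1/2) (- a$2/2) + E$1$1 * complex_of_real ((1 - a$3)/2)"

definition phi :: "real^3 \<Rightarrow> complex^2" where
  "phi a = vec2 (complex_of_real (sqrt ((1 + a$3)/2))) (Complex (a$1 / sqrt (2*(1 + a$3))) (a$2 / sqrt (2*(1 + a$3))))"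

lemma phi_qf:
  fixes E :: "complex^2^2"
  assumes a1: "a \<bullet> a = 1" and a3: "a$3 > -1"
  shows "(\<Sum>i\<in>UNIV. cnj (phi a $ i) * (E *v phi a) $ i) = tq E a"
proof -
  define t where "t = 1 + a$3"
  have t: "t > 0" using a3 t_def by simp
  define S where "S = sqrt (t/2)"
  define K where "K = sqrt (2*t)"
  have SS: "S * S = t/2" using t S_def by simp
  have KK: "K * K = 2*t" using t K_def by simp
  have SK: "S * K = t" using t unfolding S_def K_def by (simp add: real_sqrt_mult[symmetric])
  have Kp: "K > 0" using t K_def by simp
  have sq: "(a$1)^2 + (a$2)^2 = 1 - (a$3)^2" using a1 unfolding inner3 by simp
  have e0: "S * (x / K) = x / 2" for x
  proof -
    have "S * (x / K) = x * (S*K) / (K*K)" using Kp by (simp add: field_simps)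
    also have "\<dots> = x / 2" unfolding SK KK using t by simp
    finally show ?thesis .
  qed
  have e2: "(a$1 / K)^2 + (a$2 / K)^2 = (1 - a$3) / 2"
  proof -
    have "(a$1 / K)^2 + (a$2 / K)^2 = ((a$1)^2 + (a$2)^2) / (K*K)" by (simp add: power2_eq_square add_divide_distrib)
    also have "\<dots> = (1 - a$3) * t / (2 * t)" unfolding sq KK t_def by (simp add: power2_eq_square algebra_simps)
    finally show ?thesis using t by simp
  qed
  define x0 where "x0 = complex_of_real S"
  define w1 where "w1 = a$1 / K"
  define w2 where "w2 = a$2 / K"
  have sw: "S * w1 = a$1 / 2" "S * w2 = a$2 / 2" using e0 w1_def w2_def by auto
  have ww: "w1^2 + w2^2 = (1 - a$3) / 2" using e2 w1_def w2_def by simp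
  define x1 where "x1 = Complex w1 w2"
  have phi_eq: "phi a = vec2 x0 x1"
    unfolding phi_def S_def K_def t_def x0_def x1_def w1_def w2_def by simp
  have gen: "(\<Sum>i\<in>UNIV. cnj (vec2 x0 x1 $ i) * (E *v vec2 x0 x1) $ i) =
     E$0$0 * (cnj x0 * x0) + E$0$1 * (cnj x0 * x1) + E$1$0 * (cnj x1 * x0) + E$1$1 * (cnj x1 * x1)"
    unfolding qf2 by (simp add: algebra_simps)
  have p1: "cnj x0 * x0 = complex_of_real ((1 + a$3)/2)" unfolding x0_def using SS t_def by (simp add: complex_eq_iff)
  have p2: "cnj x0 * x1 = Complex (a$1/2) (a$2/2)" unfolding x0_def x1_def using sw by (simp add: complex_eq_iff)
  have p3: "cnj x1 * x0 = Complex (a$1/2) (- a$2/2)" unfolding x0_def x1_def using sw by (simp add: complex_eq_iff mult.commute)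
  have p4: "cnj x1 * x1 = complex_of_real ((1 - a$3)/2)" unfolding x1_def using ww by (simp add: complex_eq_iff power2_eq_square)
  show ?thesis unfolding phi_eq gen p1 p2 p3 p4 tq_def ..
qed

lemma av_vals':
  "av (Suc 0) $ 1 = c3" "av (Suc 0) $ 2 = c3" "av (Suc 0) $ 3 = c3"
  by (simp_all add: av_def)

lemma c3c3: "c3 * (c3 * x) = x / 3" using c3sq by (metis mult.assoc mult.commute mult_1 times_divide_eq_left)

lemma sum14: "(\<Sum>i=1..(4::nat). f i) = f 1 + f 2 + f 3 + f 4"
proof -
  have "{1..(4::nat)} = {1,2,3,4}" by auto
  thus ?thesis by (simp add: add.assoc)
qed

lemma key:
  assumes "hermitian_cm E"
  shows "Sform s E = (\<Sum>i=1..4. (Re (tq E (av i)) * (1/4)) *\<^sub>R bm 1 ((- (3 * s)) *\<^sub>R av i))"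
proof -
  have h: "Im (E$0$0) = 0" "Im (E$1$1) = 0" "E$0$1 = cnj (E$1$0)" using assms herm2 by auto
  show ?thesis
    unfolding vec_eq_iff forall2 Sform_def sum_component sum14
    using h
    apply (simp add: complex_eq_iff av_vals av_vals' tq_def)
    apply (simp add: algebra_simps c3c3 c3sq)
    apply (simp add: field_simps)
    done
qed

lemma tq_sum: "tq (sum f A) a = (\<Sum>x\<in>A. tq (f x) a)"
  by (simp add: tq_def sum_component sum_distrib_right sum.distrib sum_divide_distrib)

lemma tq_one: "Re (tq (mat 1) a) = 1"
  by (simp add: tq_def mat_def add_divide_distrib[symmetric])

lemma sum_list_nth: "sum_list M = (\<Sum>a<length M. M ! a)"
  by (simp add: sum_list_sum_nth atLeast0LessThan)

lemma LHS4:
  assumes s: "0 \<le> s" "s \<le> 1/3" and F: "\<forall>M\<in>F. povm M"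
  shows "has_LHS_model 4 (werner s) F"
  unfolding has_LHS_model_def
proof (intro exI conjI)
  let ?p = "\<lambda>i::nat. (1/4::real)"
  let ?\<rho> = "\<lambda>i. bm 1 ((- (3 * s)) *\<^sub>R av i)"
  let ?q = "\<lambda>(M::(complex^2^2) list) a i. Re (tq (M!a) (av i))"
  show "\<forall>i\<in>{1..4}. 0 \<le> ?p i" by simp
  show "(\<Sum>i=1..4. ?p i) = 1" by (simp add: sum14)
  show "\<forall>i\<in>{1..4}. density (?\<rho> i)"
  proof
    fix i :: nat assume i: "i \<in> {1..4}"
    have "((- (3 * s)) *\<^sub>R av i) \<bullet> ((- (3 * s)) *\<^sub>R av i) = (3 * s)^2 * (av i \<bullet> av i)"
      by (simp add: power2_eq_square)
    also have "\<dots> \<le> 1^2"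
    proof -
      have "(3 * s) * (3 * s) \<le> 1" using mult_le_one[of "3 * s" "3 * s"] s by simp
      thus ?thesis using av_props[OF i] by (simp add: power2_eq_square)
    qed
    finally have "psd (?\<rho> i)" by (intro psd_bm) auto
    thus "density (?\<rho> i)" unfolding density_def by (simp add: trace_bm)
  qed
  show "\<forall>M\<in>F. \<forall>i\<in>{1..4}. (\<forall>a<length M. 0 \<le> ?q M a i) \<and> (\<Sum>a<length M. ?q M a i) = 1"
  proof (intro ballI conjI allI impI)
    fix M i a assume M: "M \<in> F" and i: "i \<in> {1..4::nat}" and a: "a < length M"
    have "psd (M!a)" using F M a unfolding povm_def by auto
    hence "0 \<le> Re (\<Sum>j\<in>UNIV. cnj (phi (av i) $ j) * ((M!a) *v phi (av i)) $ j)"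
      unfolding psd_def Let_def by blast
    thus "0 \<le> ?q M a i" using phi_qf[OF av_props[OF i]] by simp
  next
    fix M i assume M: "M \<in> F" and i: "i \<in> {1..4::nat}"
    have "(\<Sum>a<length M. ?q M a i) = Re (tq (\<Sum>a<length M. M!a) (av i))"
      by (simp add: tq_sum)
    also have "\<dots> = 1" using F M unfolding povm_def sum_list_nth[symmetric] by (simp add: tq_one)
    finally show "(\<Sum>a<length M. ?q M a i) = 1" .
  qed
  show "\<forall>M\<in>F. \<forall>a<length M. assemblage (werner s) M a = (\<Sum>i=1..4. (?q M a i * ?p i) *\<^sub>R ?\<rho> i)"
  proof (intro ballI allI impI)
    fix M a assume M: "M \<in> F" and a: "a < length M"
    have "psd (M!a)" using F M a unfolding povm_def by auto
    hence "hermitian_cm (M!a)" by (simp add: psd_def)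
    thus "assemblage (werner s) M a = (\<Sum>i=1..4. (?q M a i * ?p i) *\<^sub>R ?\<rho> i)"
      unfolding assemblage_def ptrace_formula by (simp add: key)
  qed
qed

lemma gamma_gt4: assumes "1/3 < r" shows "gamma (werner r) > 4"
proof (cases "\<exists>n. \<forall>F. (\<forall>M\<in>F. povm M) \<longrightarrow> has_LHS_model n (werner r) F")
  case True
  define m where "m = (LEAST n. \<forall>F. (\<forall>M\<in>F. povm M) \<longrightarrow> has_LHS_model n (werner r) F)"
  have "\<forall>F. (\<forall>M\<in>F. povm M) \<longrightarrow> has_LHS_model m (werner r) F"
    unfolding m_def using True by (rule LeastI_ex)
  hence "has_LHS_model m (werner r) {M. povm M}" by auto
  hence "\<not> m \<le> 4" using notLHS[OF _ assms] by blast
  hence "m > 4" by simp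
  thus ?thesis unfolding gamma_def using True m_def by (simp add: numeral_eq_enat)
next
  case False
  have "gamma (werner r) = \<infinity>" unfolding gamma_def using False by (rule if_not_P)
  thus ?thesis by simp
qed

lemma gamma_le4: assumes "0 \<le> s" "s \<le> 1/3" shows "gamma (werner s) \<le> 4"
proof -
  have P: "\<forall>F. (\<forall>M\<in>F. povm M) \<longrightarrow> has_LHS_model 4 (werner s) F" using LHS4[OF assms] by blast
  hence "(LEAST n. \<forall>F. (\<forall>M\<in>F. povm M) \<longrightarrow> has_LHS_model n (werner s) F) \<le> 4" by (rule Least_le)
  moreover have ex: "\<exists>n. \<forall>F. (\<forall>M\<in>F. povm M) \<longrightarrow> has_LHS_model n (werner s) F" using P by blast
  have "gamma (werner s) = enat (LEAST n. \<forall>F. (\<forall>M\<in>F. povm M) \<longrightarrow> has_LHS_model n (werner s) F)"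
    unfolding gamma_def using ex by (rule if_P)
  ultimately show ?thesis by (simp add: numeral_eq_enat)
qed

theorem corollary1:
  shows "(\<forall>r::real. 1/3 < r \<and> r \<le> 1/2 \<longrightarrow> gamma (werner r) > 4) \<and>
         (\<forall>r s :: real. 1/3 < r \<and> r \<le> 1/2 \<and> 0 \<le> s \<and> s \<le> 1/3 \<longrightarrow>
              gamma (werner s) < gamma (werner r))"
proof (intro conjI allI impI)
  fix r :: real assume "1/3 < r \<and> r \<le> 1/2"
  thus "gamma (werner r) > 4" using gamma_gt4 by blast
next
  fix r s :: real assume a: "1/3 < r \<and> r \<le> 1/2 \<and> 0 \<le> s \<and> s \<le> 1/3"
  have "gamma (werner s) \<le> 4" using a gamma_le4 by blast
  also have "4 < gamma (werner r)" using a gamma_gt4 by blast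
  finally show "gamma (werner s) < gamma (werner r)" .
qed
end
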